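(* Let $k\ge1$ and $B>0$ with $B\neq2$ be constants and let $F$ be as defined below. For every $(\alpha_L,\alpha_R)\in[0,1]^2$, the iterates $F^{(t)}(\alpha_L,\alpha_R)=F\circ\cdots\circ F(\alpha_L,\alpha_R)$ ($t$ times) converge, as $t\to\infty$, to the unique fixed point of $F$ (which is $(1/2,1/2)$ if $B<2$, and the unique solution in $(1/2,1)^2$ of $\exp(B\sqrt k(1-2\alpha_R))=\frac{1-\alpha_L}{\alpha_L}$, $\exp(\frac{B}{\sqrt k}(1-2\alpha_L))=\frac{1-\alpha_R}{\alpha_R}$ if $B>2$).
   Context: The map $F$: for $(\alpha_L,\alpha_R)\in[0,1]^2$, if $\sqrt{\alpha_L\alpha_R}\,B\le1$ set $(\theta_L,\theta_R)=(0,0)$; otherwise let $(\theta_L,\theta_R)$ be the unique solution with $\theta_L,\theta_R>0$ of $\exp(-B\sqrt k\,\alpha_R\theta_R)=1-\theta_L$ and $\exp(-\frac{B}{\sqrt k}\alpha_L\theta_L)=1-\theta_R$. Then $F(\alpha_L,\alpha_R)=\big(\tfrac12(1+\theta_L\alpha_L),\tfrac12(1+\theta_R\alpha_R)\big)$. *)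

theory Defs
  imports "HOL-Analysis.Analysis"
begin

definition theta :: "real \<Rightarrow> real \<Rightarrow> real \<times> real \<Rightarrow> real \<times> real" where
  "theta B k a = (let aL = fst a; aR = snd a in
     if sqrt (aL * aR) * B \<le> 1 then (0, 0)
     else (THE th. fst th > 0 \<and> snd th > 0 \<and>
             exp (- B * sqrt k * aR * snd th) = 1 - fst th \<and>
             exp (- (B / sqrt k) * aL * fst th) = 1 - snd th))"

definition F :: "real \<Rightarrow> real \<Rightarrow> real \<times> real \<Rightarrow> real \<times> real" where
  "F B k a = (let th = theta B k a in
     ((1 + fst th * fst a) / 2, (1 + snd th * snd a) / 2))"

definition fp_eqs :: "real \<Rightarrow> real \<Rightarrow> real \<times> real \<Rightarrow> bool" where
  "fp_eqs B k a = (exp (B * sqrt k * (1 - 2 * snd a)) = (1 - fst a) / fst a \<and>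
                   exp ((B / sqrt k) * (1 - 2 * fst a)) = (1 - snd a) / snd a)"

end

theory Submission
  imports Defs
begin


lemma exp_strict: fixes x :: real assumes "x \<noteq> 0" shows "1 + x < exp x"
proof (cases "1 + x/2 \<ge> 0")
  case True
  have "(1 + x/2)^2 \<le> exp (x/2) ^2"
    using True exp_ge_add_one_self[of "x/2"] by (intro power_mono) auto
  also have "exp (x/2)^2 = exp x" by (simp add: power2_eq_square flip: exp_add)
  finally have "(1+x/2)^2 \<le> exp x" .
  moreover have "1 + x < (1+x/2)^2" proof -
    have "0 < x*x" using assms by (cases "x > 0") (auto simp: mult_neg_neg)
    then show ?thesis by (simp add: power2_eq_square field_simps)
  qed
  ultimately show ?thesis by linarith
next
  case False
  then have "1 + x < 0" by linarith
  then show ?thesis using exp_gt_zero[of x] by linarith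
qed

lemma sinh_gt: fixes w :: real assumes "w > 0" shows "2*w < exp w - exp (-w)"
proof -
  have "(\<lambda>w. exp w - exp (-w) - 2*w) 0 < (\<lambda>w. exp w - exp (-w) - 2*w) w"
  proof (rule DERIV_pos_imp_increasing_open[OF assms])
    fix x :: real assume x: "0 < x" "x < w"
    have "1 + x < exp x" "1 + (-x) < exp (-x)" using exp_strict[of x] exp_strict[of "-x"] x by auto
    then show "\<exists>y. DERIV (\<lambda>w. exp w - exp (-w) - 2*w) x :> y \<and> y > 0"
    proof (intro exI conjI)
      show "DERIV (\<lambda>w. exp w - exp (-w) - 2*w) x :> exp x + exp (-x) - 2"
        by (rule derivative_eq_intros refl | simp)+
    qed auto
  next
    show "continuous_on {0..w} (\<lambda>w. exp w - exp (-w) - 2*w)" by (intro continuous_intros)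
  qed
  then show ?thesis by simp
qed

lemma ratio_dec:
  fixes f f' :: "real \<Rightarrow> real"
  assumes der: "\<And>x. 0 < x \<Longrightarrow> DERIV f x :> f' x"
    and cond: "\<And>x. 0 < x \<Longrightarrow> x * f' x < f x"
    and ab: "0 < a" "a < b"
  shows "f b / b < f a / a"
proof -
  have "(\<lambda>x. f x / x) a > (\<lambda>x. f x / x) b"
  proof (rule DERIV_neg_imp_decreasing[OF ab(2)])
    fix x assume x: "a \<le> x" "x \<le> b"
    then have x0: "0 < x" using ab by linarith
    have "DERIV (\<lambda>x. f x / x) x :> (f' x * x - f x * 1) / (x * x)"
      using der[OF x0] x0 by (intro DERIV_divide) (auto intro: DERIV_ident)
    moreover have "(f' x * x - f x * 1) / (x * x) < 0"
      using cond[OF x0] x0 by (intro divide_neg_pos) (auto simp: mult.commute)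
    ultimately show "\<exists>y. DERIV (\<lambda>x. f x / x) x :> y \<and> y < 0" by blast
  qed
  then show ?thesis by simp
qed

lemma ratio_subhom:
  fixes f f' :: "real \<Rightarrow> real"
  assumes der: "\<And>x. 0 < x \<Longrightarrow> DERIV f x :> f' x"
    and cond: "\<And>x. 0 < x \<Longrightarrow> x * f' x < f x"
    and l: "0 < l" "l < 1" and w: "0 < w"
  shows "l * f w < f (l * w)"
proof -
  have "f w / w < f (l*w) / (l*w)"
    using ratio_dec[OF der cond, of "l*w" w] l w by (simp add: mult_less_cancel_right1)
  then have "f w / w * (l*w) < f (l*w)" using l w by (simp add: pos_less_divide_eq)
  then show ?thesis using w by (simp add: field_simps)
qed

lemma subhom_exp:
  fixes c l w :: real
  assumes "0 < c" "0 < l" "l < 1" "0 < w"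
  shows "l * (1 - exp (- (c * w))) < 1 - exp (- (c * (l * w)))"
proof -
  have "l * (1 - exp (- (c * w))) < 1 - exp (- (l * (c * w)))"
  proof (rule ratio_subhom[where f = "\<lambda>w. 1 - exp (-w)" and f' = "\<lambda>w. exp (-w)"])
    fix x :: real assume x: "0 < x"
    show "DERIV (\<lambda>w. 1 - exp (-w)) x :> exp (-x)"
      by (rule derivative_eq_intros refl | simp)+
    have "1 + x < exp x" using exp_strict x by simp
    then have "(1 + x) * exp (-x) < exp x * exp (-x)" by (intro mult_strict_right_mono) auto
    then have "(1 + x) * exp (-x) < 1" by (simp flip: exp_add)
    then show "x * exp (-x) < 1 - exp (-x)" by (simp add: algebra_simps)
  qed (use assms in auto)
  then show ?thesis by (simp add: algebra_simps)
qed

definition G :: "real \<Rightarrow> real" where "G w = (exp w - 1) / (exp w + 1)"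

lemma G_subhom:
  fixes l w :: real
  assumes "0 < l" "l < 1" "0 < w"
  shows "l * G w < G (l * w)"
proof (rule ratio_subhom[where f = G and f' = "\<lambda>w. 2 * exp w / (exp w + 1)^2"])
  fix x :: real assume x: "0 < x"
  have p: "exp x + 1 \<noteq> 0" by (metis add_pos_pos exp_gt_zero less_numeral_extra(1) less_irrefl)
  show "DERIV G x :> 2 * exp x / (exp x + 1)^2"
    unfolding G_def
    by (rule derivative_eq_intros refl | use p in \<open>simp add: power2_eq_square field_simps\<close>)+
  have "2*x < exp x - exp (-x)" using sinh_gt x by simp
  then have "2*x*exp x < (exp x - exp (-x)) * exp x" by (intro mult_strict_right_mono) auto
  also have "(exp x - exp (-x)) * exp x = (exp x - 1) * (exp x + 1)"
    by (simp add: algebra_simps power2_eq_square flip: exp_add)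
  finally have "2*x*exp x < (exp x - 1) * (exp x + 1)" .
  then have "(2*x*exp x) / (exp x+1)^2 < (exp x - 1) * (exp x + 1) / (exp x+1)^2"
    using p by (intro divide_strict_right_mono) auto
  moreover have "(exp x - 1) * (exp x + 1) / (exp x+1)^2 = G x"
    unfolding G_def using p by (simp add: power2_eq_square)
  ultimately show "x * (2 * exp x / (exp x + 1)^2) < G x" by (simp add: mult.assoc mult.left_commute)
qed (use assms in auto)

lemma G_mono: "a \<le> b \<Longrightarrow> G a \<le> G b"
proof -
  have eq: "G w = 1 - 2 / (exp w + 1)" for w
  proof -
    have "exp w + 1 > 0" by (simp add: add_pos_pos)
    then show ?thesis unfolding G_def by (simp add: field_simps)
  qed
  assume "a \<le> b"
  then have "2 / (exp b + 1) \<le> 2 / (exp a + 1)"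
    by (intro divide_left_mono) (auto simp: add_pos_pos)
  then show ?thesis unfolding eq by simp
qed

lemma G_pos: "0 < w \<Longrightarrow> 0 < G w"
  unfolding G_def by (intro divide_pos_pos) (auto simp: add_pos_pos)

lemma G_lt: fixes w :: real assumes "0 < w" shows "G w < w / 2"
proof -
  have "(\<lambda>w. w * exp w + w - 2 * exp w + 2) 0 < (\<lambda>w. w * exp w + w - 2 * exp w + 2) w"
  proof (rule DERIV_pos_imp_increasing_open[OF assms])
    fix x :: real assume x: "0 < x" "x < w"
    have "1 + (-x) < exp (-x)" using exp_strict[of "-x"] x by auto
    then have "(1 - x) * exp x < exp (-x) * exp x" by (intro mult_strict_right_mono) auto
    then have "(1 - x) * exp x < 1" by (simp flip: exp_add)
    then show "\<exists>y. DERIV (\<lambda>w. w * exp w + w - 2 * exp w + 2) x :> y \<and> y > 0"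
    proof (intro exI conjI)
      show "DERIV (\<lambda>w. w * exp w + w - 2 * exp w + 2) x :> 1 + x * exp x - exp x"
        by (rule derivative_eq_intros refl | simp add: algebra_simps)+
    qed (auto simp: algebra_simps)
  next
    show "continuous_on {0..w} (\<lambda>w. w * exp w + w - 2 * exp w + 2)" by (intro continuous_intros)
  qed
  then have "2 * exp w - 2 < w * exp w + w" by simp
  then show ?thesis unfolding G_def by (simp add: field_simps add_pos_pos)
qed



lemma cmp:
  fixes fa fb :: "real \<Rightarrow> real"
  assumes mono1: "\<And>a b. 0 < a \<Longrightarrow> a \<le> b \<Longrightarrow> fa a \<le> fa b"
    and mono2: "\<And>a b. 0 < a \<Longrightarrow> a \<le> b \<Longrightarrow> fb a \<le> fb b"
    and sub1: "\<And>l w. 0 < l \<Longrightarrow> l < 1 \<Longrightarrow> 0 < w \<Longrightarrow> l * fa w < fa (l * w)"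
    and sub2: "\<And>l w. 0 < l \<Longrightarrow> l < 1 \<Longrightarrow> 0 < w \<Longrightarrow> l * fb w < fb (l * w)"
    and s: "0 < s1" "0 < s2" "s1 = fa s2" "s2 = fb s1"
    and t: "0 < t1" "0 < t2" "fa t2 \<le> t1" "fb t1 \<le> t2"
  shows "s1 \<le> t1 \<and> s2 \<le> t2"
proof (rule ccontr)
  assume nt: "\<not> (s1 \<le> t1 \<and> s2 \<le> t2)"
  define l where "l = min (t1/s1) (t2/s2)"
  have h1: "fa s2 = s1" and h2: "fb s1 = s2" using s(3,4) by simp_all
  have "0 < t1/s1" "0 < t2/s2" using s(1,2) t(1,2) by simp_all
  then have l0: "0 < l" by (simp add: l_def)
  have l1: "l < 1"
  proof (cases "t1 < s1")
    case True
    then have "t1/s1 < 1" using s(1) by simp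
    then show ?thesis unfolding l_def by linarith
  next
    case False
    then have "t2 < s2" using nt by linarith
    then have "t2/s2 < 1" using s(2) by simp
    then show ?thesis unfolding l_def by linarith
  qed
  show False
  proof (cases "t1/s1 \<le> t2/s2")
    case True
    then have l: "l = t1/s1" by (simp add: l_def)
    have "l * s2 \<le> t2" using True s(1,2) by (simp add: l pos_le_divide_eq mult.commute)
    have "fa t2 \<ge> fa (l * s2)" using \<open>l * s2 \<le> t2\<close> l0 s(2) by (intro mono1) auto
    moreover have "fa (l * s2) > l * fa s2" using sub1[OF l0 l1 s(2)] .
    moreover have "l * fa s2 = t1" using s(1) h1 by (simp add: l)
    ultimately show False using t(3) by linarith
  next
    case False
    then have l: "l = t2/s2" by (simp add: l_def)
    have "t2/s2 * s1 \<le> t1/s1 * s1" using False s(1) by (intro mult_right_mono) auto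
    then have "l * s1 \<le> t1" using s(1) by (simp add: l)
    have "fb t1 \<ge> fb (l * s1)" using \<open>l * s1 \<le> t1\<close> l0 s(1) by (intro mono2) auto
    moreover have "fb (l * s1) > l * fb s1" using sub2[OF l0 l1 s(1)] .
    moreover have "l * fb s1 = t2" using s(2) h2 by (simp add: l)
    ultimately show False using t(4) by linarith
  qed
qed

definition sol :: "real \<Rightarrow> real \<Rightarrow> real \<times> real \<Rightarrow> bool" where
  "sol c1 c2 s \<longleftrightarrow> 0 < fst s \<and> 0 < snd s \<and> exp (-(c1 * snd s)) = 1 - fst s \<and> exp (-(c2 * fst s)) = 1 - snd s"

lemma lt_lin: fixes s1 s2 c :: real
  assumes "0 < s1" "0 < s2" "exp (-(c * s2)) = 1 - s1" shows "s1 < c * s2"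
proof (cases "c * s2 = 0")
  case True then show ?thesis using assms by simp
next
  case False
  then have "1 + (-(c * s2)) < exp (-(c * s2::real))" using exp_strict[of "-(c * s2)"] by simp
  then show ?thesis using assms by simp
qed

lemma sol_imp: assumes "sol c1 c2 s" shows "0 < c1 \<and> 0 < c2 \<and> 1 < c1 * c2"
proof -
  obtain s1 s2 where ss: "s = (s1, s2)" by (cases s)
  have p: "0 < s1" "0 < s2" "exp (-(c1 * s2)) = 1 - s1" "exp (-(c2 * s1)) = 1 - s2"
    using assms by (auto simp: sol_def ss)
  have a: "s1 < c1 * s2" by (rule lt_lin[OF p(1,2,3)])
  have b: "s2 < c2 * s1" by (rule lt_lin[OF p(2,1,4)])
  have c1: "0 < c1"
  proof (rule ccontr)
    assume "\<not> 0 < c1"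
    then have "c1 * s2 \<le> 0" using p by (simp add: mult_nonpos_nonneg)
    then show False using a p by linarith
  qed
  have c2: "0 < c2"
  proof (rule ccontr)
    assume "\<not> 0 < c2"
    then have "c2 * s1 \<le> 0" using p by (simp add: mult_nonpos_nonneg)
    then show False using b p by linarith
  qed
  have "c1 * s2 < c1 * (c2 * s1)" using b c1 by simp
  then have "s1 < c1 * (c2 * s1)" using a by linarith
  then have "1 * s1 < (c1 * c2) * s1" by (simp add: mult.assoc)
  then have "1 < c1 * c2" using p by (simp add: mult_less_cancel_right)
  with c1 c2 show ?thesis by simp
qed

lemma sol_mono:
  assumes "sol c1 c2 s" "sol d1 d2 t" "c1 \<le> d1" "c2 \<le> d2"
  shows "fst s \<le> fst t \<and> snd s \<le> snd t"
proof -
  have c: "0 < c1" "0 < c2" using sol_imp[OF assms(1)] by auto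
  show ?thesis
  proof (rule cmp[where fa = "\<lambda>w. 1 - exp (-(c1*w))" and fb = "\<lambda>w. 1 - exp (-(c2*w))"])
    have "c1 * snd t \<le> d1 * snd t" using assms(2,3) by (intro mult_right_mono) (auto simp: sol_def)
    then have e: "exp (- (d1 * snd t)) \<le> exp (- (c1 * snd t))" by simp
    have "exp (- (d1 * snd t)) = 1 - fst t" using assms(2) by (simp add: sol_def)
    then show "1 - exp (- (c1 * snd t)) \<le> fst t" using e by linarith
    have "c2 * fst t \<le> d2 * fst t" using assms(2,4) by (intro mult_right_mono) (auto simp: sol_def)
    then have e: "exp (- (d2 * fst t)) \<le> exp (- (c2 * fst t))" by simp
    have "exp (- (d2 * fst t)) = 1 - snd t" using assms(2) by (simp add: sol_def)
    then show "1 - exp (- (c2 * fst t)) \<le> snd t" using e by linarith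
  qed (use assms c in \<open>auto simp: sol_def intro: subhom_exp mult_left_mono\<close>)
qed

lemma sol_unique: "sol c1 c2 s \<Longrightarrow> sol c1 c2 t \<Longrightarrow> s = t"
  using sol_mono[of c1 c2 s c1 c2 t] sol_mono[of c1 c2 t c1 c2 s]
  by (simp add: prod_eq_iff)

lemma sol_exists:
  fixes c1 c2 :: real
  assumes c: "0 < c1" "0 < c2" "1 < c1 * c2"
  shows "\<exists>s. sol c1 c2 s"
proof -
  define d where "d = (\<lambda>s. 1 - exp (-(c1 * (1 - exp (-(c2 * s))))) - s)"
  have der: "DERIV d 0 :> c1 * c2 - 1"
    unfolding d_def by (rule derivative_eq_intros refl | simp)+
  obtain e where e: "e > 0" "\<And>h. h > 0 \<Longrightarrow> h < e \<Longrightarrow> d 0 < d (0 + h)"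
    using DERIV_pos_inc_right[OF der] c by auto
  define s0 where "s0 = min (e/2) (1/2)"
  have s0: "0 < s0" "s0 < e" "s0 \<le> 1" using e by (auto simp: s0_def)
  have d0: "d 0 = 0" by (simp add: d_def)
  have ds0: "0 \<le> d s0" using e(2)[OF s0(1,2)] d0 by simp
  have d1: "d 1 \<le> 0" by (simp add: d_def)
  have cont: "continuous_on {s0..1} d" unfolding d_def by (intro continuous_intros)
  obtain x where x: "s0 \<le> x" "x \<le> 1" "d x = 0" using IVT2'[of d 1 0 s0, OF d1 ds0 s0(3) cont] by auto
  have x0: "0 < x" using x s0 by linarith
  have y0: "0 < 1 - exp (-(c2 * x))" using x0 c by simp
  have "sol c1 c2 (x, 1 - exp (-(c2 * x)))"
    unfolding sol_def using x0 y0 x(3) by (auto simp: d_def)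
  then show ?thesis by blast
qed



lemma cond_iff:
  fixes B x y :: real
  assumes "0 < B" "0 \<le> x" "0 \<le> y"
  shows "(sqrt (x * y) * B \<le> 1) \<longleftrightarrow> B^2 * x * y \<le> 1"
proof -
  have "sqrt (x * y) * B = sqrt (B^2 * x * y)"
    using assms by (simp add: real_sqrt_mult mult.commute mult.left_commute)
  then show ?thesis by simp
qed

lemma c_prod:
  fixes B k x y :: real
  assumes "0 < k"
  shows "(B * sqrt k * y) * (B / sqrt k * x) = B^2 * x * y"
  using assms by (simp add: power2_eq_square field_simps)

lemma theta_zero:
  assumes "sqrt (fst a * snd a) * B \<le> 1"
  shows "theta B k a = (0, 0)"
  using assms by (simp add: theta_def Let_def)

lemma theta_sol:
  fixes B k :: real and a :: "real \<times> real"
  assumes k: "0 < k" and B: "0 < B" and a: "0 \<le> fst a" "0 \<le> snd a"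
    and c: "\<not> sqrt (fst a * snd a) * B \<le> 1"
  shows "sol (B * sqrt k * snd a) (B / sqrt k * fst a) (theta B k a)"
proof -
  have c2: "1 < B^2 * fst a * snd a" using c cond_iff[OF B a] by simp
  then have xy: "0 < fst a" "0 < snd a" using a
    by (auto simp: order_less_le)
  have pos: "0 < B * sqrt k * snd a" "0 < B / sqrt k * fst a" using xy k B by auto
  have "1 < (B * sqrt k * snd a) * (B / sqrt k * fst a)" using c2 c_prod[OF k] by simp
  then obtain s where s: "sol (B * sqrt k * snd a) (B / sqrt k * fst a) s"
    using sol_exists pos by blast
  have eqP: "(\<lambda>th. fst th > 0 \<and> snd th > 0 \<and>
             exp (- B * sqrt k * snd a * snd th) = 1 - fst th \<and>
             exp (- (B / sqrt k) * fst a * fst th) = 1 - snd th)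
        = sol (B * sqrt k * snd a) (B / sqrt k * fst a)"
    by (auto simp: sol_def fun_eq_iff)
  have "theta B k a = (THE th. sol (B * sqrt k * snd a) (B / sqrt k * fst a) th)"
    using c unfolding theta_def Let_def eqP by simp
  also have "\<dots> = s" using s sol_unique by blast
  finally show ?thesis using s by simp
qed

lemma theta_eqs:
  fixes B k :: real and a :: "real \<times> real"
  assumes k: "0 < k" and B: "0 < B" and a: "0 \<le> fst a" "0 \<le> snd a"
  shows "0 \<le> fst (theta B k a) \<and> 0 \<le> snd (theta B k a) \<and> fst (theta B k a) < 1 \<and> snd (theta B k a) < 1
     \<and> exp (-(B * sqrt k * snd a * snd (theta B k a))) = 1 - fst (theta B k a)
     \<and> exp (-(B / sqrt k * fst a * fst (theta B k a))) = 1 - snd (theta B k a)"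
proof (cases "sqrt (fst a * snd a) * B \<le> 1")
  case True then show ?thesis by (simp add: theta_zero)
next
  case False
  have s: "sol (B * sqrt k * snd a) (B / sqrt k * fst a) (theta B k a)"
    by (rule theta_sol[OF k B a False])
  have "0 < exp (-(B * sqrt k * snd a * snd (theta B k a)))" "0 < exp (-(B / sqrt k * fst a * fst (theta B k a)))"
    by simp_all
  with s show ?thesis by (auto simp: sol_def)
qed

definition S where "S = {0..1::real} \<times> {0..1::real}"
definition S' where "S' = {1/2..1::real} \<times> {1/2..1::real}"
definition le2 :: "real \<times> real \<Rightarrow> real \<times> real \<Rightarrow> bool" where
  "le2 p q \<longleftrightarrow> fst p \<le> fst q \<and> snd p \<le> snd q"

lemma S'_S: "a \<in> S' \<Longrightarrow> a \<in> S" by (auto simp: S_def S'_def)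

lemma F_S':
  assumes k: "0 < k" and B: "0 < B" and a: "a \<in> S"
  shows "F B k a \<in> S'"
proof -
  have a': "0 \<le> fst a" "0 \<le> snd a" "fst a \<le> 1" "snd a \<le> 1" using a by (auto simp: S_def)
  note e = theta_eqs[OF k B a'(1,2)]
  have "fst (theta B k a) * fst a \<le> 1" "snd (theta B k a) * snd a \<le> 1"
    using e a' by (auto intro!: mult_le_one)
  moreover have "0 \<le> fst (theta B k a) * fst a" "0 \<le> snd (theta B k a) * snd a"
    using e a' by auto
  ultimately show ?thesis by (auto simp: S'_def F_def Let_def)
qed

lemma theta_mono:
  assumes k: "0 < k" and B: "0 < B" and a: "a \<in> S" and b: "b \<in> S" and le: "le2 a b"
  shows "le2 (theta B k a) (theta B k b)"
proof -
  have a': "0 \<le> fst a" "0 \<le> snd a" using a by (auto simp: S_def)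
  have b': "0 \<le> fst b" "0 \<le> snd b" using b by (auto simp: S_def)
  note ea = theta_eqs[OF k B a'] and eb = theta_eqs[OF k B b']
  show ?thesis
  proof (cases "sqrt (fst a * snd a) * B \<le> 1")
    case True then show ?thesis using eb by (simp add: theta_zero le2_def)
  next
    case False
    then have "1 < B^2 * fst a * snd a" using cond_iff[OF B a'] by simp
    moreover have "B^2 * fst a * snd a \<le> B^2 * fst b * snd b"
      using le a' b' by (auto simp: le2_def intro!: mult_mono)
    ultimately have "\<not> sqrt (fst b * snd b) * B \<le> 1" using cond_iff[OF B b'] by simp
    from theta_sol[OF k B a' False] theta_sol[OF k B b' this]
    show ?thesis using le k B
      by (auto simp: le2_def intro!: sol_mono[THEN conjunct1] sol_mono[THEN conjunct2] mult_left_mono divide_right_mono)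
  qed
qed

lemma F_mono:
  assumes k: "0 < k" and B: "0 < B" and a: "a \<in> S" and b: "b \<in> S" and le: "le2 a b"
  shows "le2 (F B k a) (F B k b)"
proof -
  have a': "0 \<le> fst a" "0 \<le> snd a" using a by (auto simp: S_def)
  have b': "0 \<le> fst b" "0 \<le> snd b" using b by (auto simp: S_def)
  note ea = theta_eqs[OF k B a'] and eb = theta_eqs[OF k B b']
  have t: "le2 (theta B k a) (theta B k b)" by (rule theta_mono[OF k B a b le])
  have "fst (theta B k a) * fst a \<le> fst (theta B k b) * fst b"
    using t le ea eb a' b' by (auto simp: le2_def intro!: mult_mono)
  moreover have "snd (theta B k a) * snd a \<le> snd (theta B k b) * snd b"
    using t le ea eb a' b' by (auto simp: le2_def intro!: mult_mono)
  ultimately show ?thesis by (simp add: le2_def F_def Let_def)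
qed



lemma fixed_char:
  assumes k: "0 < k" and B: "0 < B" and q: "q \<in> S" and fx: "F B k q = q"
  shows "q = (1/2, 1/2) \<or> (q \<in> {1/2<..<1} \<times> {1/2<..<1} \<and> fp_eqs B k q)"
proof (cases "sqrt (fst q * snd q) * B \<le> 1")
  case True
  then have "F B k q = (1/2, 1/2)" by (simp add: F_def Let_def theta_zero)
  then show ?thesis using fx by simp
next
  case False
  have q': "0 \<le> fst q" "0 \<le> snd q" "fst q \<le> 1" "snd q \<le> 1" using q by (auto simp: S_def)
  have s: "sol (B * sqrt k * snd q) (B / sqrt k * fst q) (theta B k q)"
    by (rule theta_sol[OF k B q'(1,2) False])
  define x where "x = fst q"
  define y where "y = snd q"
  define tl where "tl = fst (theta B k q)"
  define tr where "tr = snd (theta B k q)"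
  have sp: "0 < tl" "0 < tr" "exp (-(B * sqrt k * y * tr)) = 1 - tl" "exp (-(B / sqrt k * x * tl)) = 1 - tr"
    using s by (auto simp: sol_def x_def y_def tl_def tr_def)
  have tl1: "tl < 1" "tr < 1" using sp(3,4) exp_gt_zero by (smt (verit))+
  have fx1: "x = (1 + tl * x) / 2" and fx2: "y = (1 + tr * y)/2"
    using fx by (auto simp: F_def Let_def x_def y_def tl_def tr_def prod_eq_iff)
  have x0: "0 < x"
  proof (rule ccontr)
    assume "\<not> 0 < x" then have "x = 0" using q' by (simp add: x_def)
    then show False using fx1 by simp
  qed
  have y0: "0 < y"
  proof (rule ccontr)
    assume "\<not> 0 < y" then have "y = 0" using q' by (simp add: y_def)
    then show False using fx2 by simp
  qed
  have e1: "tl * x = 2*x - 1" using fx1 by (simp add: field_simps)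
  have e2: "tr * y = 2*y - 1" using fx2 by (simp add: field_simps)
  have "0 < tl * x" "0 < tr * y" using sp x0 y0 by simp_all
  moreover have "tl * x < x" "tr * y < y" using tl1 x0 y0 by simp_all
  ultimately have rng: "1/2 < x" "x < 1" "1/2 < y" "y < 1" using e1 e2 by linarith+
  have "B * sqrt k * y * tr = B * sqrt k * (tr * y)" by (simp add: mult_ac)
  also have "\<dots> = B * sqrt k * (2*y - 1)" using e2 by simp
  finally have "exp (B * sqrt k * (1 - 2 * y)) = exp (-(B * sqrt k * y * tr))"
    by (simp add: algebra_simps)
  also have "\<dots> = 1 - tl" by (rule sp(3))
  also have "\<dots> = (1 - x) / x" using e1 x0 by (simp add: field_simps)
  finally have f1: "exp (B * sqrt k * (1 - 2 * y)) = (1 - x) / x" .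
  have "B / sqrt k * x * tl = B / sqrt k * (tl * x)" by (simp add: mult_ac)
  also have "\<dots> = B / sqrt k * (2*x - 1)" using e1 by simp
  finally have "exp (B / sqrt k * (1 - 2 * x)) = exp (-(B / sqrt k * x * tl))"
    by (simp add: algebra_simps)
  also have "\<dots> = 1 - tr" by (rule sp(4))
  also have "\<dots> = (1 - y) / y" using e2 y0 by (simp add: field_simps)
  finally have f2: "exp (B / sqrt k * (1 - 2 * x)) = (1 - y) / y" .
  show ?thesis using rng f1 f2 by (simp add: fp_eqs_def x_def y_def mem_Times_iff)
qed

lemma fp_to_G:
  fixes a x y :: real
  assumes x: "1/2 < x" "x < 1" and e: "exp (a * (1 - 2*y)) = (1 - x) / x"
  shows "2*x - 1 = G (a * (2*y - 1))"
proof -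
  define w where "w = a * (2*y - 1)"
  have "exp (-w) = (1-x)/x" using e by (simp add: w_def algebra_simps)
  then have ew: "exp w = x / (1 - x)" using x by (simp add: exp_minus field_simps)
  have "G w = 2*x - 1" unfolding G_def ew using x by (simp add: field_simps)
  then show ?thesis by (simp add: w_def)
qed

lemma fp_G:
  assumes p: "p \<in> {1/2<..<1} \<times> {1/2<..<1}" "fp_eqs B k p"
  shows "2 * fst p - 1 = G (B * sqrt k * (2 * snd p - 1)) \<and> 2 * snd p - 1 = G (B / sqrt k * (2 * fst p - 1))"
proof
  have r: "1/2 < fst p" "fst p < 1" "1/2 < snd p" "snd p < 1" using p(1) by (auto simp: mem_Times_iff)
  have e1: "exp (B * sqrt k * (1 - 2 * snd p)) = (1 - fst p) / fst p" using p(2) unfolding fp_eqs_def by (rule conjunct1)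
  have e2: "exp (B / sqrt k * (1 - 2 * fst p)) = (1 - snd p) / snd p" using p(2) unfolding fp_eqs_def by (rule conjunct2)
  show "2 * fst p - 1 = G (B * sqrt k * (2 * snd p - 1))" by (rule fp_to_G[OF r(1,2) e1])
  show "2 * snd p - 1 = G (B / sqrt k * (2 * fst p - 1))" by (rule fp_to_G[OF r(3,4) e2])
qed

lemma fp_unique:
  assumes k: "0 < k" and B: "0 < B"
    and p: "p \<in> {1/2<..<1} \<times> {1/2<..<1}" "fp_eqs B k p"
    and q: "q \<in> {1/2<..<1} \<times> {1/2<..<1}" "fp_eqs B k q"
  shows "p = q"
proof -
  have a: "0 < B * sqrt k" "0 < B / sqrt k" using k B by auto
  have gp: "2 * fst p - 1 = G (B * sqrt k * (2 * snd p - 1))" "2 * snd p - 1 = G (B / sqrt k * (2 * fst p - 1))"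
    using fp_G[OF p] by (rule conjunct1, rule conjunct2)
  have gq: "2 * fst q - 1 = G (B * sqrt k * (2 * snd q - 1))" "2 * snd q - 1 = G (B / sqrt k * (2 * fst q - 1))"
    using fp_G[OF q] by (rule conjunct1, rule conjunct2)
  have mono: "G (c * a') \<le> G (c * b')" if "0 < c" "a' \<le> b'" for c a' b' :: real
    using that by (intro G_mono mult_left_mono) auto
  have sub: "l * G (c * w) < G (c * (l * w))" if "0 < c" "0 < l" "l < 1" "0 < w" for c l w :: real
  proof -
    have "l * G (c * w) < G (l * (c * w))" using that by (intro G_subhom) auto
    then show ?thesis by (simp add: mult.left_commute)
  qed
  have pp: "0 < 2 * fst p - 1" "0 < 2 * snd p - 1" using p(1) by (auto simp: mem_Times_iff)
  have qq: "0 < 2 * fst q - 1" "0 < 2 * snd q - 1" using q(1) by (auto simp: mem_Times_iff)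
  have "2 * fst p - 1 \<le> 2 * fst q - 1 \<and> 2 * snd p - 1 \<le> 2 * snd q - 1"
    apply (rule cmp[where fa = "\<lambda>w. G (B * sqrt k * w)" and fb = "\<lambda>w. G (B / sqrt k * w)"])
    subgoal by (rule mono) (use a in auto)
    subgoal by (rule mono) (use a in auto)
    subgoal by (rule sub) (use a in auto)
    subgoal by (rule sub) (use a in auto)
    apply (rule pp(1))
    apply (rule pp(2))
    apply (rule gp(1))
    apply (rule gp(2))
    apply (rule qq(1))
    apply (rule qq(2))
    apply (rule eq_refl, rule gq(1)[symmetric])
    apply (rule eq_refl, rule gq(2)[symmetric])
    done
  moreover have "2 * fst q - 1 \<le> 2 * fst p - 1 \<and> 2 * snd q - 1 \<le> 2 * snd p - 1"
    apply (rule cmp[where fa = "\<lambda>w. G (B * sqrt k * w)" and fb = "\<lambda>w. G (B / sqrt k * w)"])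
    subgoal by (rule mono) (use a in auto)
    subgoal by (rule mono) (use a in auto)
    subgoal by (rule sub) (use a in auto)
    subgoal by (rule sub) (use a in auto)
    apply (rule qq(1))
    apply (rule qq(2))
    apply (rule gq(1))
    apply (rule gq(2))
    apply (rule pp(1))
    apply (rule pp(2))
    apply (rule eq_refl, rule gp(1)[symmetric])
    apply (rule eq_refl, rule gp(2)[symmetric])
    done
  ultimately show ?thesis by (simp add: prod_eq_iff)
qed

lemma fp_none:
  assumes k: "0 < k" and B: "0 < B" "B < 2"
    and p: "p \<in> {1/2<..<1} \<times> {1/2<..<1}" "fp_eqs B k p"
  shows False
proof -
  define u where "u = 2 * fst p - 1"
  define v where "v = 2 * snd p - 1"
  have gp: "u = G (B * sqrt k * v)" "v = G (B / sqrt k * u)"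
    using fp_G[OF p] unfolding u_def v_def by (rule conjunct1, rule conjunct2)
  have uv: "0 < u" "0 < v" using p(1) by (auto simp: mem_Times_iff u_def v_def)
  have a: "0 < B * sqrt k" "0 < B / sqrt k" using k B by auto
  have w1: "0 < B * sqrt k * v" using a uv by simp
  have w2: "0 < B / sqrt k * u" using a(2) uv(1) by (rule mult_pos_pos)
  have "u < B * sqrt k * v / 2" by (subst gp(1)) (rule G_lt[OF w1])
  moreover have "v < B / sqrt k * u / 2" by (subst gp(2)) (rule G_lt[OF w2])
  ultimately have "u < B * sqrt k * (B / sqrt k * u / 2) / 2"
    using a by (smt (verit) divide_strict_right_mono mult_strict_left_mono)
  also have "\<dots> = (B^2 / 4) * u" using k by (simp add: power2_eq_square field_simps)
  finally have "1 * u < (B^2/4) * u" by simp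
  then have "1 < B^2/4" using uv by (simp add: mult_less_cancel_right)
  moreover have "B^2 < 2^2" using B by (intro power_strict_mono) auto
  ultimately show False by simp
qed



lemma limit_fixed:
  assumes k: "0 < k" and B: "0 < B"
    and X: "\<And>t. X t \<in> S'" and step: "\<And>t. X (Suc t) = F B k (X t)"
    and lx: "(\<lambda>t. fst (X t)) \<longlonglongrightarrow> x" and ly: "(\<lambda>t. snd (X t)) \<longlonglongrightarrow> y"
    and nh: "(x, y) = (1/2, 1/2) \<Longrightarrow> B \<le> 2"
  shows "F B k (x, y) = (x, y) \<and> (x, y) \<in> S'"
proof -
  have Xr: "1/2 \<le> fst (X t)" "fst (X t) \<le> 1" "1/2 \<le> snd (X t)" "snd (X t) \<le> 1" for t
    using X[of t] by (auto simp: S'_def mem_Times_iff)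
  have xr: "1/2 \<le> x" "x \<le> 1"
    by (rule LIMSEQ_le_const[OF lx], use Xr in blast, rule LIMSEQ_le_const2[OF lx], use Xr in blast)
  have yr: "1/2 \<le> y" "y \<le> 1"
    by (rule LIMSEQ_le_const[OF ly], use Xr in blast, rule LIMSEQ_le_const2[OF ly], use Xr in blast)
  have inS': "(x, y) \<in> S'" using xr yr by (simp add: S'_def)
  define tl where "tl t = fst (theta B k (X t))" for t
  define tr where "tr t = snd (theta B k (X t))" for t
  have e: "exp (-(B * sqrt k * snd (X t) * tr t)) = 1 - tl t"
          "exp (-(B / sqrt k * fst (X t) * tl t)) = 1 - tr t" for t
    using theta_eqs[OF k B, of "X t"] Xr[of t] by (auto simp: tl_def tr_def)
  have tl_eq: "tl t = (2 * fst (X (Suc t)) - 1) / fst (X t)" for t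
    using step[of t] Xr[of t] by (simp add: F_def Let_def tl_def field_simps)
  have tr_eq: "tr t = (2 * snd (X (Suc t)) - 1) / snd (X t)" for t
    using step[of t] Xr[of t] by (simp add: F_def Let_def tr_def field_simps)
  define tx where "tx = (2 * x - 1) / x"
  define ty where "ty = (2 * y - 1) / y"
  have ltl: "tl \<longlonglongrightarrow> tx" unfolding tl_eq tx_def
    using xr by (intro tendsto_intros LIMSEQ_Suc[OF lx] lx) auto
  have ltr: "tr \<longlonglongrightarrow> ty" unfolding tr_eq ty_def
    using yr by (intro tendsto_intros LIMSEQ_Suc[OF ly] ly) auto
  have "(\<lambda>t. exp (-(B * sqrt k * snd (X t) * tr t))) \<longlonglongrightarrow> exp (-(B * sqrt k * y * ty))"
    by (intro tendsto_intros ly ltr)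
  moreover have "(\<lambda>t. exp (-(B * sqrt k * snd (X t) * tr t))) \<longlonglongrightarrow> 1 - tx"
    unfolding e by (intro tendsto_intros ltl)
  ultimately have e1: "exp (-(B * sqrt k * y * ty)) = 1 - tx" by (rule LIMSEQ_unique)
  have "(\<lambda>t. exp (-(B / sqrt k * fst (X t) * tl t))) \<longlonglongrightarrow> exp (-(B / sqrt k * x * tx))"
    by (intro tendsto_intros lx ltl)
  moreover have "(\<lambda>t. exp (-(B / sqrt k * fst (X t) * tl t))) \<longlonglongrightarrow> 1 - ty"
    unfolding e by (intro tendsto_intros ltr)
  ultimately have e2: "exp (-(B / sqrt k * x * tx)) = 1 - ty" by (rule LIMSEQ_unique)
  have x0: "0 < x" and y0: "0 < y" using xr yr by auto
  have txx: "tx * x = 2 * x - 1" using x0 by (simp add: tx_def)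
  have tyy: "ty * y = 2 * y - 1" using y0 by (simp add: ty_def)
  have tx0: "0 \<le> tx" using xr by (simp add: tx_def)
  have ty0: "0 \<le> ty" using yr by (simp add: ty_def)
  show ?thesis
  proof (cases "tx = 0 \<or> ty = 0")
    case True
    then have "tx = 0 \<and> ty = 0" using e1 e2 by auto
    then have "x = 1/2" "y = 1/2" using txx tyy by auto
    then have "B \<le> 2" using nh by simp
    have "sqrt (x * y) = sqrt ((1/2)^2)" unfolding \<open>x = 1/2\<close> \<open>y = 1/2\<close>
      by (simp add: power2_eq_square)
    also have "\<dots> = 1/2" by (rule real_sqrt_abs[THEN trans]) simp
    finally have "sqrt (x * y) = 1/2" .
    then have "sqrt (x * y) * B \<le> 1" using \<open>B \<le> 2\<close> by (simp only:)
    then have "F B k (x, y) = (1/2, 1/2)" by (simp add: F_def Let_def theta_zero)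
    moreover have "(x, y) = (1/2, 1/2)" using \<open>x = 1/2\<close> \<open>y = 1/2\<close> by simp
    ultimately show ?thesis using inS' by metis
  next
    case False
    then have pos: "0 < tx" "0 < ty" using tx0 ty0 by auto
    have s: "sol (B * sqrt k * snd (x, y)) (B / sqrt k * fst (x, y)) (tx, ty)"
      using pos e1 e2 by (simp add: sol_def)
    have "1 < (B * sqrt k * y) * (B / sqrt k * x)" using sol_imp[OF s] by simp
    then have "1 < B^2 * x * y" using c_prod[OF k] by simp
    then have nc: "\<not> sqrt (fst (x, y) * snd (x, y)) * B \<le> 1" using cond_iff[OF B, of x y] x0 y0 by simp
    have "theta B k (x, y) = (tx, ty)"
      using sol_unique[OF theta_sol[OF k B _ _ nc] s] x0 y0 by simp
    then have "F B k (x, y) = ((1 + tx * x) / 2, (1 + ty * y) / 2)" by (simp add: F_def Let_def)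
    also have "\<dots> = (x, y)" using txx tyy by simp
    finally show ?thesis using inS' by simp
  qed
qed



theorem lemma10:
  fixes B k :: real
  assumes "k \<ge> 1" and "B > 0" and "B \<noteq> 2"
  shows "\<exists>p \<in> {0..1} \<times> {0..1}.
           F B k p = p \<and>
           (\<forall>q \<in> {0..1} \<times> {0..1}. F B k q = q \<longrightarrow> q = p) \<and>
           (B < 2 \<longrightarrow> p = (1/2, 1/2)) \<and>
           (B > 2 \<longrightarrow> p \<in> {1/2<..<1} \<times> {1/2<..<1} \<and> fp_eqs B k p \<and>
              (\<forall>q \<in> {1/2<..<1} \<times> {1/2<..<1}. fp_eqs B k q \<longrightarrow> q = p)) \<and>
           (\<forall>a \<in> {0..1} \<times> {0..1}. (\<lambda>t. (F B k ^^ t) a) \<longlonglongrightarrow> p)"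
proof -
  have k: "0 < k" using assms(1) by linarith
  have B: "0 < B" by (rule assms(2))
  let ?F = "F B k"
  have iterS: "(?F ^^ t) a \<in> S" if "a \<in> S" for a t
    using that by (induction t) (auto intro: S'_S F_S'[OF k B])
  have iterS': "(?F ^^ t) a \<in> S'" if "a \<in> S'" for a t
    using that by (induction t) (auto intro: S'_S F_S'[OF k B])
  have iter_mono: "le2 ((?F ^^ t) a) ((?F ^^ t) b)" if "a \<in> S" "b \<in> S" "le2 a b" for a b t
    using that
  proof (induction t)
    case 0 then show ?case by simp
  next
    case (Suc t)
    then show ?case using iterS[OF Suc.prems(1), of t] iterS[OF Suc.prems(2), of t]
      by (simp add: F_mono[OF k B])
  qed
  define lo where "lo t = (?F ^^ t) (1/2, 1/2)" for t
  define hi where "hi t = (?F ^^ t) (1, 1)" for t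
  have hS': "(1/2, 1/2) \<in> S'" "(1::real, 1::real) \<in> S'" by (auto simp: S'_def)
  have loS': "lo t \<in> S'" and hiS': "hi t \<in> S'" for t
    unfolding lo_def hi_def by (auto intro: iterS' hS')
  have lo_step: "lo (Suc t) = ?F (lo t)" and hi_step: "hi (Suc t) = ?F (hi t)" for t
    by (simp_all add: lo_def hi_def)
  have sandw: "le2 (lo t) ((?F ^^ t) a) \<and> le2 ((?F ^^ t) a) (hi t)" if "a \<in> S'" for a t
  proof -
    have "le2 (1/2, 1/2) a" "le2 a (1, 1)" using that by (auto simp: S'_def le2_def)
    then show ?thesis unfolding lo_def hi_def
      using that hS' by (auto intro!: iter_mono S'_S)
  qed
  have lo_inc: "le2 (lo t) (lo (Suc t))" for t
  proof -
    have "lo (Suc t) = (?F ^^ t) (?F (1/2, 1/2))" unfolding lo_def funpow.simps o_apply by (rule funpow_swap1)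
    moreover have "?F (1/2, 1/2) \<in> S'" using hS' by (auto intro: F_S'[OF k B] S'_S)
    ultimately show ?thesis using sandw by auto
  qed
  have hi_dec: "le2 (hi (Suc t)) (hi t)" for t
  proof -
    have "hi (Suc t) = (?F ^^ t) (?F (1, 1))" unfolding hi_def funpow.simps o_apply by (rule funpow_swap1)
    moreover have "?F (1, 1) \<in> S'" using hS' by (auto intro: F_S'[OF k B] S'_S)
    ultimately show ?thesis using sandw by auto
  qed
  have lohi: "le2 (lo t) (hi t)" for t
    using sandw[OF hS'(1), of t] by (simp add: lo_def)
  have bnd: "1/2 \<le> fst (lo t)" "fst (lo t) \<le> 1" "1/2 \<le> snd (lo t)" "snd (lo t) \<le> 1"
            "1/2 \<le> fst (hi t)" "fst (hi t) \<le> 1" "1/2 \<le> snd (hi t)" "snd (hi t) \<le> 1" for t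
    using loS'[of t] hiS'[of t] by (auto simp: S'_def)
  have "incseq (\<lambda>t. fst (lo t))" using lo_inc by (auto intro!: incseq_SucI simp: le2_def)
  then obtain xl where xl: "(\<lambda>t. fst (lo t)) \<longlonglongrightarrow> xl" "\<And>t. fst (lo t) \<le> xl"
    using incseq_convergent[of _ 1] bnd by metis
  have "incseq (\<lambda>t. snd (lo t))" using lo_inc by (auto intro!: incseq_SucI simp: le2_def)
  then obtain yl where yl: "(\<lambda>t. snd (lo t)) \<longlonglongrightarrow> yl" "\<And>t. snd (lo t) \<le> yl"
    using incseq_convergent[of _ 1] bnd by metis
  have "decseq (\<lambda>t. fst (hi t))" using hi_dec by (auto intro!: decseq_SucI simp: le2_def)
  then obtain xh where xh: "(\<lambda>t. fst (hi t)) \<longlonglongrightarrow> xh" "\<And>t. xh \<le> fst (hi t)"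
    using decseq_convergent[of _ "1/2"] bnd by metis
  have "decseq (\<lambda>t. snd (hi t))" using hi_dec by (auto intro!: decseq_SucI simp: le2_def)
  then obtain yh where yh: "(\<lambda>t. snd (hi t)) \<longlonglongrightarrow> yh" "\<And>t. yh \<le> snd (hi t)"
    using decseq_convergent[of _ "1/2"] bnd by metis
  have big: "1/2 < fst (lo 1)" if "2 < B"
  proof -
    have "\<not> sqrt (fst (1/2::real, 1/2::real) * snd (1/2::real, 1/2::real)) * B \<le> 1"
    proof -
      have "sqrt (fst (1/2::real, 1/2::real) * snd (1/2::real, 1/2::real)) = sqrt ((1/2)^2)"
        by (simp add: power2_eq_square)
      also have "\<dots> = 1/2" by (rule real_sqrt_abs[THEN trans]) simp
      finally have h: "sqrt (fst (1/2::real, 1/2::real) * snd (1/2::real, 1/2::real)) = 1/2" .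
      show ?thesis unfolding h using that by linarith
    qed
    from theta_sol[OF k B _ _ this] have "0 < fst (theta B k (1/2, 1/2))" by (simp add: sol_def)
    then show ?thesis by (simp add: lo_def F_def Let_def)
  qed
  have xl_big: "1/2 < xl" if "2 < B" using big[OF that] xl(2)[of 1] by linarith
  have xh_big: "1/2 < xh" if "2 < B"
  proof -
    have "xl \<le> xh" by (rule LIMSEQ_le[OF xl(1) xh(1)]) (use lohi in \<open>auto simp: le2_def\<close>)
    then show ?thesis using xl_big[OF that] by linarith
  qed
  have nhl: "(xl, yl) = (1/2, 1/2) \<Longrightarrow> B \<le> 2" using xl_big by force
  have nhh: "(xh, yh) = (1/2, 1/2) \<Longrightarrow> B \<le> 2" using xh_big by force
  have fixL: "?F (xl, yl) = (xl, yl) \<and> (xl, yl) \<in> S'"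
    by (rule limit_fixed[OF k B loS' lo_step xl(1) yl(1) nhl])
  have fixH: "?F (xh, yh) = (xh, yh) \<and> (xh, yh) \<in> S'"
    by (rule limit_fixed[OF k B hiS' hi_step xh(1) yh(1) nhh])
  have LH: "(xl, yl) = (xh, yh)"
  proof (cases "B < 2")
    case True
    have "q = (1/2, 1/2)" if "q \<in> S" "?F q = q" for q
      using fixed_char[OF k B that] fp_none[OF k B True] by blast
    then show ?thesis using fixL fixH S'_S by metis
  next
    case False
    then have B2: "2 < B" using assms(3) by simp
    have "(xl, yl) \<in> {1/2<..<1} \<times> {1/2<..<1} \<and> fp_eqs B k (xl, yl)"
      using fixed_char[OF k B S'_S] fixL xl_big[OF B2] by force
    moreover have "(xh, yh) \<in> {1/2<..<1} \<times> {1/2<..<1} \<and> fp_eqs B k (xh, yh)"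
      using fixed_char[OF k B S'_S] fixH xh_big[OF B2] by force
    ultimately show ?thesis using fp_unique[OF k B] by blast
  qed
  define p where "p = (xl, yl)"
  have conv: "(\<lambda>t. (?F ^^ t) a) \<longlonglongrightarrow> p" if a: "a \<in> S" for a
  proof -
    have Fa: "?F a \<in> S'" by (rule F_S'[OF k B a])
    have sw: "le2 (lo t) ((?F ^^ Suc t) a) \<and> le2 ((?F ^^ Suc t) a) (hi t)" for t
      using sandw[OF Fa, of t] by (simp only: funpow.simps o_apply funpow_swap1)
    have c1: "(\<lambda>t. fst ((?F ^^ Suc t) a)) \<longlonglongrightarrow> xl"
    proof (rule real_tendsto_sandwich[OF _ _ xl(1)])
      show "eventually (\<lambda>t. fst (lo t) \<le> fst ((?F ^^ Suc t) a)) sequentially"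
        using sw unfolding le2_def by (intro always_eventually allI) blast
      show "eventually (\<lambda>t. fst ((?F ^^ Suc t) a) \<le> fst (hi t)) sequentially"
        using sw unfolding le2_def by (intro always_eventually allI) blast
      show "(\<lambda>t. fst (hi t)) \<longlonglongrightarrow> xl" using xh(1) LH by simp
    qed
    have c2: "(\<lambda>t. snd ((?F ^^ Suc t) a)) \<longlonglongrightarrow> yl"
    proof (rule real_tendsto_sandwich[OF _ _ yl(1)])
      show "eventually (\<lambda>t. snd (lo t) \<le> snd ((?F ^^ Suc t) a)) sequentially"
        using sw unfolding le2_def by (intro always_eventually allI) blast
      show "eventually (\<lambda>t. snd ((?F ^^ Suc t) a) \<le> snd (hi t)) sequentially"
        using sw unfolding le2_def by (intro always_eventually allI) blast
      show "(\<lambda>t. snd (hi t)) \<longlonglongrightarrow> yl" using yh(1) LH by simp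
    qed
    have "(\<lambda>t. (fst ((?F ^^ Suc t) a), snd ((?F ^^ Suc t) a))) \<longlonglongrightarrow> (xl, yl)"
      by (rule tendsto_Pair[OF c1 c2])
    then have "(\<lambda>t. (?F ^^ Suc t) a) \<longlonglongrightarrow> p" by (simp add: p_def)
    then show ?thesis by (rule LIMSEQ_imp_Suc)
  qed
  have pS: "p \<in> S" using fixL by (auto simp: p_def intro: S'_S)
  have pfix: "?F p = p" using fixL by (simp add: p_def)
  have uniq: "q = p" if "q \<in> S" "?F q = q" for q
  proof -
    have q': "q \<in> S'" using F_S'[OF k B that(1)] that(2) by simp
    have fq: "(?F ^^ t) q = q" for t by (induction t) (simp_all add: that(2))
    have "le2 (lo t) q \<and> le2 q (hi t)" for t
      using sandw[OF q', of t] by (simp only: fq)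
    then have "fst (lo t) \<le> fst q" "snd (lo t) \<le> snd q" "fst q \<le> fst (hi t)" "snd q \<le> snd (hi t)" for t
      by (auto simp: le2_def)
    then have "xl \<le> fst q" "yl \<le> snd q" "fst q \<le> xh" "snd q \<le> yh"
      by (auto intro: LIMSEQ_le_const2[OF xl(1)] LIMSEQ_le_const2[OF yl(1)]
                      LIMSEQ_le_const[OF xh(1)] LIMSEQ_le_const[OF yh(1)])
    then show ?thesis using LH by (auto simp: p_def prod_eq_iff)
  qed
  show ?thesis
  proof (rule bexI[of _ p], intro conjI ballI impI)
    show "p \<in> {0..1} \<times> {0..1}" using pS by (simp add: S_def)
    show "?F p = p" by (rule pfix)
    show "q = p" if "q \<in> {0..1} \<times> {0..1}" "?F q = q" for q
      using uniq that by (simp add: S_def)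
    show "p = (1/2, 1/2)" if "B < 2"
      using fixed_char[OF k B pS pfix] fp_none[OF k B that] by blast
    assume B2: "2 < B"
    have pc: "p \<noteq> (1/2, 1/2)" using xl_big[OF B2] by (auto simp: p_def)
    show "p \<in> {1/2<..<1} \<times> {1/2<..<1}" "fp_eqs B k p"
      using fixed_char[OF k B pS pfix] pc by auto
    show "q = p" if "q \<in> {1/2<..<1} \<times> {1/2<..<1}" "fp_eqs B k q" for q
      using fp_unique[OF k B _ _ that] fixed_char[OF k B pS pfix] pc by auto
  next
    show "(\<lambda>t. (?F ^^ t) a) \<longlonglongrightarrow> p" if "a \<in> {0..1} \<times> {0..1}" for a
      using conv that by (simp add: S_def)
  qed
qed

end
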